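(* Let $(X,c)$ be a finite metric space and let $R, M \subseteq X$ be nonempty. Let $Q$ be a minimal subset of $R$ such that $c_{\mu Q} = c_{\mu R}$ for all $\mu \in M$. Then for every $x \in X$, $$c_{xQ} \le 2\,c_{xM} + c_{xR}.$$
   Context: For $x\in X$ and a nonempty $F\subseteq X$, $c_{xF} = \min_{f\in F} c_{xf}$ denotes the distance from $x$ to the nearest point of $F$. *)

theory Defs
  imports Complex_Main
begin

definition metric_on :: "'a set \<Rightarrow> ('a \<Rightarrow> 'a \<Rightarrow> real) \<Rightarrow> bool" where
  "metric_on X c \<longleftrightarrow>
     (\<forall>x\<in>X. \<forall>y\<in>X. c x y \<ge> 0) \<and>
     (\<forall>x\<in>X. \<forall>y\<in>X. c x y = 0 \<longleftrightarrow> x = y) \<and>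
     (\<forall>x\<in>X. \<forall>y\<in>X. c x y = c y x) \<and>
     (\<forall>x\<in>X. \<forall>y\<in>X. \<forall>z\<in>X. c x z \<le> c x y + c y z)"

definition setdist_c :: "('a \<Rightarrow> 'a \<Rightarrow> real) \<Rightarrow> 'a \<Rightarrow> 'a set \<Rightarrow> real" where
  "setdist_c c x F = Min (c x ` F)"

end

theory Submission
  imports Defs
begin

lemma sd_le: "finite F \<Longrightarrow> f \<in> F \<Longrightarrow> setdist_c c x F \<le> c x f"
  unfolding setdist_c_def by (simp add: Min_le)

lemma sd_in: "finite F \<Longrightarrow> F \<noteq> {} \<Longrightarrow> \<exists>f\<in>F. setdist_c c x F = c x f"
proof -
  assume "finite F" "F \<noteq> {}"
  then have "Min (c x ` F) \<in> c x ` F" by (intro Min_in) auto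
  then show ?thesis unfolding setdist_c_def by auto
qed

theorem lemma2p1:
  fixes X :: "'a set" and c :: "'a \<Rightarrow> 'a \<Rightarrow> real" and R M Q :: "'a set"
  assumes "finite X" and "metric_on X c"
    and "R \<subseteq> X" and "R \<noteq> {}" and "M \<subseteq> X" and "M \<noteq> {}"
    and "Q \<subseteq> R" and "Q \<noteq> {}"
    and "\<forall>\<mu>\<in>M. setdist_c c \<mu> Q = setdist_c c \<mu> R"
    and "\<forall>Q'. Q' \<subset> Q \<longrightarrow>
           \<not> (Q' \<noteq> {} \<and> (\<forall>\<mu>\<in>M. setdist_c c \<mu> Q' = setdist_c c \<mu> R))"
    and "x \<in> X"
  shows "setdist_c c x Q \<le> 2 * setdist_c c x M + setdist_c c x R"
proof -
  have fR: "finite R" using assms(1,3) by (rule finite_subset[rotated])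
  have fM: "finite M" using assms(1,5) by (rule finite_subset[rotated])
  have fQ: "finite Q" using fR assms(7) by (rule finite_subset[rotated])
  obtain m where m: "m \<in> M" "setdist_c c x M = c x m" using sd_in[OF fM assms(6)] by blast
  obtain r where r: "r \<in> R" "setdist_c c x R = c x r" using sd_in[OF fR assms(4)] by blast
  obtain q where q: "q \<in> Q" "setdist_c c m Q = c m q" using sd_in[OF fQ assms(8)] by blast
  have mX: "m \<in> X" "r \<in> X" "q \<in> X" using m r q assms by auto
  have tri: "\<And>a b d. a \<in> X \<Longrightarrow> b \<in> X \<Longrightarrow> d \<in> X \<Longrightarrow> c a d \<le> c a b + c b d"
    and sym: "\<And>a b. a \<in> X \<Longrightarrow> b \<in> X \<Longrightarrow> c a b = c b a"
    using assms(2) unfolding metric_on_def by metis+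
  have "c m q = setdist_c c m R" using q m assms(9) by auto
  also have "\<dots> \<le> c m r" using sd_le[OF fR r(1)] .
  also have "\<dots> \<le> c m x + c x r" using tri[of m x r] mX assms(11) by simp
  finally have 1: "c m q \<le> c x m + c x r" using sym[of m x] mX assms(11) by simp
  have "setdist_c c x Q \<le> c x q" using sd_le[OF fQ q(1)] .
  also have "\<dots> \<le> c x m + c m q" using tri[of x m q] mX assms(11) by simp
  finally show ?thesis using 1 m r by simp
qed

end
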